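(* Let $p\in[0,1)$, $\alpha\in[0,1]$, $0\le h_1<\dots<h_N\le1$, and nonnegative weights $f_0^S(h_j),f_0^{NS}(h_j)$, $j=1,\dots,N$, each summing to $1$; set $f_0(h_j)=\alpha f_0^S(h_j)+(1-\alpha)f_0^{NS}(h_j)$, assume $f_0(h_N)>0$, and let $f_0([h_i,1])=\sum_{j\ge i}f_0(h_j)$. Let $m_0^{S,j}\in[-1,1]$ be given. Let $f^{NS,1},\dots,f^{NS,N}\in C([0,+\infty),P([-1,1]))$ (weak topology) with initial data $f_0^{NS,i}$, write $m^{NS,j}(t)=\int_{-1}^1w\,f^{NS,j}(t,dw)$, $$m(t)=\alpha\sum_{j}f_0^S(h_j)m_0^{S,j}+(1-\alpha)\sum_jf_0^{NS}(h_j)m^{NS,j}(t),\quad \beta_i(t)=\alpha\sum_{j\ge i}f_0^S(h_j)m_0^{S,j}+(1-\alpha)\sum_{j\ge i}f_0^{NS}(h_j)m^{NS,j}(t),$$ and assume that for all $i$, $t\ge0$ and $\phi\in C^1([-1,1])$, $$\int\phi\,df^{NS,i}(t)=\int\phi\,df_0^{NS,i}+\int_0^t\!\!\int_{-1}^1\phi'(w)\Big[p\big(m(s)-w\big)+(1-p)\big(\beta_i(s)-f_0([h_i,1])w\big)\Big]f^{NS,i}(s,dw)\,ds.$$ Then for every $i=1,\dots,N$, $$\frac{d}{dt}m^{NS,i}(t)=\alpha\sum_{j=1}^Nm_0^{S,j}\big(p+(1-p)1_{\{j\ge i\}}\big)f_0^S(h_j)+(1-\alpha)\sum_{j=1}^N\big(p+(1-p)1_{\{j\ge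 i\}}\big)f_0^{NS}(h_j)m^{NS,j}(t)-\big(p+(1-p)f_0([h_i,1])\big)m^{NS,i}(t).$$
   Context: $P([-1,1])$ is the set of Borel probability measures on $[-1,1]$. Interpretation: $f^{NS,i}(t)$ is the opinion distribution of non-stubborn individuals at hierarchy level $h_i$, $m^{NS,i}$ its mean, $m_0^{S,j}$ the mean opinion of stubborn individuals at level $h_j$, $\alpha$ the fraction of stubborn individuals. *)

theory Defs
  imports "HOL-Probability.Probability"
begin

definition prob_on_I :: "real measure \<Rightarrow> bool" where
  "prob_on_I M \<longleftrightarrow> prob_space M \<and> sets M = sets (restrict_space borel {-1..1::real})"

text \<open>Continuity of a curve of measures in the weak topology on P([-1,1]): the weak topology
  is the coarsest topology making all maps mu |-> int phi dmu (phi continuous on [-1,1]) continuous.\<close>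
definition weakly_continuous_on :: "real set \<Rightarrow> (real \<Rightarrow> real measure) \<Rightarrow> bool" where
  "weakly_continuous_on T F \<longleftrightarrow>
     (\<forall>\<phi>::real \<Rightarrow> real. continuous_on {-1..1::real} \<phi> \<longrightarrow> continuous_on T (\<lambda>t. \<integral>w. \<phi> w \<partial>F t))"

definition C1_on_I :: "(real \<Rightarrow> real) \<Rightarrow> (real \<Rightarrow> real) \<Rightarrow> bool" where
  "C1_on_I \<phi> \<phi>' \<longleftrightarrow>
     (\<forall>w\<in>{-1..1}. (\<phi> has_real_derivative \<phi>' w) (at w within {-1..1})) \<and> continuous_on {-1..1} \<phi>'"

definition mean :: "real measure \<Rightarrow> real" where
  "mean M = (\<integral>w. w \<partial>M)"

definition f0 :: "real \<Rightarrow> (real \<Rightarrow> real) \<Rightarrow> (real \<Rightarrow> real) \<Rightarrow> real \<Rightarrow> real" where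
  "f0 \<alpha> fS fNS x = \<alpha> * fS x + (1 - \<alpha>) * fNS x"

definition f0_tail :: "real \<Rightarrow> (real \<Rightarrow> real) \<Rightarrow> (real \<Rightarrow> real) \<Rightarrow> (nat \<Rightarrow> real) \<Rightarrow> nat \<Rightarrow> nat \<Rightarrow> real" where
  "f0_tail \<alpha> fS fNS h N i = (\<Sum>j=i..N. f0 \<alpha> fS fNS (h j))"

definition mtot :: "real \<Rightarrow> (real \<Rightarrow> real) \<Rightarrow> (real \<Rightarrow> real) \<Rightarrow> (nat \<Rightarrow> real) \<Rightarrow> nat
    \<Rightarrow> (nat \<Rightarrow> real) \<Rightarrow> (nat \<Rightarrow> real \<Rightarrow> real measure) \<Rightarrow> real \<Rightarrow> real" where
  "mtot \<alpha> fS fNS h N m0S F t =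
     \<alpha> * (\<Sum>j=1..N. fS (h j) * m0S j) + (1 - \<alpha>) * (\<Sum>j=1..N. fNS (h j) * mean (F j t))"

definition beta :: "real \<Rightarrow> (real \<Rightarrow> real) \<Rightarrow> (real \<Rightarrow> real) \<Rightarrow> (nat \<Rightarrow> real) \<Rightarrow> nat
    \<Rightarrow> (nat \<Rightarrow> real) \<Rightarrow> (nat \<Rightarrow> real \<Rightarrow> real measure) \<Rightarrow> nat \<Rightarrow> real \<Rightarrow> real" where
  "beta \<alpha> fS fNS h N m0S F i t =
     \<alpha> * (\<Sum>j=i..N. fS (h j) * m0S j) + (1 - \<alpha>) * (\<Sum>j=i..N. fNS (h j) * mean (F j t))"

end

theory Submission
  imports Defs
begin

lemma integ_id:
  assumes "prob_on_I M"
  shows "integrable M (\<lambda>w. w)"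
proof -
  have ps: "prob_space M" and se: "sets M = sets (restrict_space borel {-1..1::real})"
    using assms unfolding prob_on_I_def by auto
  have sp: "space M = {-1..1}"
    using sets_eq_imp_space_eq[OF se] by (simp add: space_restrict_space)
  have meas: "(\<lambda>w. w) \<in> borel_measurable M"
    by (subst measurable_cong_sets[OF se refl]) (simp add: measurable_restrict_space1)
  show ?thesis
    apply (rule finite_measure.integrable_const_bound[where B=1])
    using ps prob_space_def apply blast
    apply (rule AE_I2) using sp apply auto[1]
    by (rule meas)
qed

lemma integ_affine:
  assumes "prob_on_I M"
  shows "(\<integral>w. 1 * (p * (a - w) + q * (b - c * w)) \<partial>M) = p*a + q*b - (p + q*c) * (\<integral>w. w \<partial>M)"
proof -
  have ps: "prob_space M" using assms unfolding prob_on_I_def by auto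
  have i: "integrable M (\<lambda>w. w)" by (rule integ_id[OF assms])
  have "(\<integral>w. 1 * (p * (a - w) + q * (b - c * w)) \<partial>M) = (\<integral>w. (p*a + q*b) - (p + q*c) * w \<partial>M)"
    by (rule Bochner_Integration.integral_cong) (auto simp: algebra_simps)
  also have "\<dots> = (p*a + q*b) - (p + q*c) * (\<integral>w. w \<partial>M)"
    apply (subst Bochner_Integration.integral_diff)
    using ps i by (auto simp: prob_space.prob_space finite_measure.integrable_const prob_space_def)
  finally show ?thesis .
qed
theorem proposition4p3:
  fixes p \<alpha> :: real and N :: nat and h :: "nat \<Rightarrow> real"
    and fS fNS :: "real \<Rightarrow> real" and m0S :: "nat \<Rightarrow> real"
    and F :: "nat \<Rightarrow> real \<Rightarrow> real measure" and F0 :: "nat \<Rightarrow> real measure"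
  assumes "0 \<le> p" "p < 1" "0 \<le> \<alpha>" "\<alpha> \<le> 1" "1 \<le> N"
    and "0 \<le> h 1" "h N \<le> 1" "\<forall>i j. 1 \<le> i \<longrightarrow> i < j \<longrightarrow> j \<le> N \<longrightarrow> h i < h j"
    and "\<forall>j\<in>{1..N}. 0 \<le> fS (h j)" "\<forall>j\<in>{1..N}. 0 \<le> fNS (h j)"
    and "(\<Sum>j=1..N. fS (h j)) = 1" "(\<Sum>j=1..N. fNS (h j)) = 1"
    and "f0 \<alpha> fS fNS (h N) > 0"
    and "\<forall>j\<in>{1..N}. -1 \<le> m0S j \<and> m0S j \<le> 1"
    and "\<forall>i\<in>{1..N}. prob_on_I (F0 i)"
    and "\<forall>i\<in>{1..N}. \<forall>t\<ge>0. prob_on_I (F i t)"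
    and "\<forall>i\<in>{1..N}. weakly_continuous_on {0..} (F i)"
    and "\<forall>i\<in>{1..N}. F i 0 = F0 i"
    and "\<forall>i\<in>{1..N}. \<forall>t\<ge>0. \<forall>\<phi> \<phi>'. C1_on_I \<phi> \<phi>' \<longrightarrow>
           (\<integral>w. \<phi> w \<partial>F i t) = (\<integral>w. \<phi> w \<partial>F0 i) +
             (LINT s:{0..t}|lborel. (\<integral>w. \<phi>' w *
                (p * (mtot \<alpha> fS fNS h N m0S F s - w)
                 + (1 - p) * (beta \<alpha> fS fNS h N m0S F i s - f0_tail \<alpha> fS fNS h N i * w)) \<partial>F i s))"
  shows "\<forall>i\<in>{1..N}. \<forall>t\<ge>0.
    ((\<lambda>t. mean (F i t)) has_real_derivative
       (\<alpha> * (\<Sum>j=1..N. m0S j * (p + (1 - p) * (if j \<ge> i then 1 else 0)) * fS (h j))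
        + (1 - \<alpha>) * (\<Sum>j=1..N. (p + (1 - p) * (if j \<ge> i then 1 else 0)) * fNS (h j) * mean (F j t))
        - (p + (1 - p) * f0_tail \<alpha> fS fNS h N i) * mean (F i t)))
    (at t within {0..})"
proof (intro ballI allI impI)
  fix i t assume iN: "i \<in> {1..N}" and t0: "(t::real) \<ge> 0"
  define c where "c = f0_tail \<alpha> fS fNS h N i"
  define g where "g s = p * mtot \<alpha> fS fNS h N m0S F s + (1 - p) * beta \<alpha> fS fNS h N m0S F i s
      - (p + (1 - p) * c) * mean (F i s)" for s
  have C1: "C1_on_I (\<lambda>w. w) (\<lambda>_. 1)"
    unfolding C1_on_I_def by (auto intro: DERIV_ident[THEN has_field_derivative_at_within])
  have cm: "continuous_on {0..} (\<lambda>s. mean (F j s))" if "j \<in> {1..N}" for j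
    using assms(17) that unfolding weakly_continuous_on_def mean_def
    by (auto intro: continuous_on_id)
  have cg: "continuous_on {0..} g"
    unfolding g_def mtot_def beta_def
    by (intro continuous_intros continuous_on_sum cm) (use iN in auto)
  have eq: "mean (F i u) = mean (F0 i) + integral {0..u} g" if u0: "u \<ge> 0" for u
  proof -
    have "mean (F i u) = mean (F0 i) + (LINT s:{0..u}|lborel. (\<integral>w. 1 *
                (p * (mtot \<alpha> fS fNS h N m0S F s - w)
                 + (1 - p) * (beta \<alpha> fS fNS h N m0S F i s - c * w)) \<partial>F i s))"
      using assms(19) iN u0 C1 unfolding mean_def c_def by blast
    also have "(LINT s:{0..u}|lborel. (\<integral>w. 1 *
                (p * (mtot \<alpha> fS fNS h N m0S F s - w)
                 + (1 - p) * (beta \<alpha> fS fNS h N m0S F i s - c * w)) \<partial>F i s))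
        = (LINT s:{0..u}|lborel. g s)"
      apply (rule set_lebesgue_integral_cong)
       apply simp
      apply (intro allI impI)
      apply (subst integ_affine)
      using assms(16) iN apply auto[1]
      by (simp add: g_def mean_def)
    also have "(LINT s:{0..u}|lborel. g s) = integral {0..u} g"
      by (rule set_borel_integral_eq_integral[OF borel_integrable_atLeastAtMost'[OF continuous_on_subset[OF cg]]]) auto
    finally show ?thesis by simp
  qed
  have eq2: "mean (F i u) = mean (F0 i) + integral {0..u} g" if "u \<in> {0..}" "dist u t < 1" for u
    using eq that by simp
  have d1: "((\<lambda>u. integral {0..u} g) has_real_derivative g t) (at t within {0..t+1})"
    by (rule integral_has_real_derivative) (use cg t0 in \<open>auto intro: continuous_on_subset\<close>)
  have atw: "at t within {0..t+1} = at t within {0..}"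
    by (rule at_within_nhd[where S="{..<t+1}"]) auto
  have d2: "((\<lambda>u. mean (F0 i) + integral {0..u} g) has_real_derivative g t) (at t within {0..})"
    using d1 unfolding atw by (auto intro!: derivative_eq_intros)
  have d3: "((\<lambda>u. mean (F i u)) has_real_derivative g t) (at t within {0..})"
    by (rule has_field_derivative_transform_within[OF d2, where d=1]) (use eq2 t0 in auto)
  show "((\<lambda>t. mean (F i t)) has_real_derivative
       (\<alpha> * (\<Sum>j=1..N. m0S j * (p + (1 - p) * (if j \<ge> i then 1 else 0)) * fS (h j))
        + (1 - \<alpha>) * (\<Sum>j=1..N. (p + (1 - p) * (if j \<ge> i then 1 else 0)) * fNS (h j) * mean (F j t))
        - (p + (1 - p) * f0_tail \<alpha> fS fNS h N i) * mean (F i t)))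
    (at t within {0..})"
  proof -
    have split: "\<And>a::nat\<Rightarrow>real. (\<Sum>j=1..N. (if j \<ge> i then 1 else 0) * a j) = (\<Sum>j=i..N. a j)"
    proof -
      fix a :: "nat\<Rightarrow>real"
      have "(\<Sum>j=1..N. (if j \<ge> i then 1 else 0) * a j) = (\<Sum>j\<in>{1..N} \<inter> {j. j \<ge> i}. a j)"
        by (simp add: sum.inter_restrict, rule sum.cong, auto)
      also have "{1..N} \<inter> {j. j \<ge> i} = {i..N}" using iN by auto
      finally show "(\<Sum>j=1..N. (if j \<ge> i then 1 else 0) * a j) = (\<Sum>j=i..N. a j)" .
    qed
    have e1: "(\<Sum>j=1..N. m0S j * (p + (1 - p) * (if j \<ge> i then 1 else 0)) * fS (h j))
       = p * (\<Sum>j=1..N. fS (h j) * m0S j) + (1 - p) * (\<Sum>j=1..N. (if j \<ge> i then 1 else 0) * (fS (h j) * m0S j))"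
      by (simp add: sum_distrib_left sum.distrib[symmetric] algebra_simps)
    have e2: "(\<Sum>j=1..N. (p + (1 - p) * (if j \<ge> i then 1 else 0)) * fNS (h j) * mean (F j t))
       = p * (\<Sum>j=1..N. fNS (h j) * mean (F j t)) + (1 - p) * (\<Sum>j=1..N. (if j \<ge> i then 1 else 0) * (fNS (h j) * mean (F j t)))"
      by (simp add: sum_distrib_left sum.distrib[symmetric] algebra_simps)
    have "g t = (\<alpha> * (\<Sum>j=1..N. m0S j * (p + (1 - p) * (if j \<ge> i then 1 else 0)) * fS (h j))
        + (1 - \<alpha>) * (\<Sum>j=1..N. (p + (1 - p) * (if j \<ge> i then 1 else 0)) * fNS (h j) * mean (F j t))
        - (p + (1 - p) * f0_tail \<alpha> fS fNS h N i) * mean (F i t))"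
      unfolding e1 e2 split g_def mtot_def beta_def c_def by (simp add: algebra_simps)
    then show ?thesis using d3 by simp
  qed
qed

end
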